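(* If $\mu$ and $\nu$ are fuzzy $\Gamma$-hyper bi-ideals of a fuzzy $\Gamma$-hypersemigroup $(M,\circ)$, then $\mu\cap\nu$ is also a fuzzy $\Gamma$-hyper bi-ideal of $(M,\circ)$.
   Context: $M,\Gamma$ are nonempty sets; a fuzzy subset of $M$ is a map $M\to[0,1]$. A fuzzy $\Gamma$-hyperoperation assigns to each $(a,\gamma,b)\in M\times\Gamma\times M$ a fuzzy subset $a\circ\gamma\circ b$. For $a\in M$ and fuzzy $\mu$: $(a\circ\gamma\circ\mu)(r)=\bigvee_{t\in M}((a\circ\gamma\circ t)(r)\wedge\mu(t))$ if $\mu\ne0$, else $0$; $(\mu\circ\gamma\circ a)(r)=\bigvee_{t\in M}(\mu(t)\wedge(t\circ\gamma\circ a)(r))$ if $\mu\ne0$, else $0$. For fuzzy $\mu,\nu$: $(\mu\circ\gamma\circ\nu)(t)=\bigvee_{p,q\in M}(\mu(p)\wedge(p\circ\gamma\circ q)(t)\wedge\nu(q))$. $(M,\circ)$ is a fuzzy $\Gamma$-hypersemigroup if $(a\circ\alpha\circ b)\circ\beta\circ c=a\circ\alpha\circ(b\circ\beta\circ c)$ for all $a,b,c\in M$, $\alpha,\beta\in\Gamma$. For fuzzy sets, $\mu\subseteq\nu$ means $\mu(x)\le\nu(x)$ for all $x$; $(\mu\cap\nu)(x)=\min(\mu(x),\nu(x))$. A fuzzy sub $\Gamma$-hypersemigroup is a fuzzy subset $\mu$ with $\mu\circ\gamma\circ\mu\subseteq\mu$ for all $\gamma\in\Gamma$. A fuzzy $\Gamma$-hyper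 bi-ideal is a fuzzy sub $\Gamma$-hypersemigroup $\mu$ with $(\mu\circ\alpha\circ y)\circ\beta\circ\mu\subseteq\mu$ for all $y\in M$, $\alpha,\beta\in\Gamma$. *)

theory Defs
  imports Complex_Main
begin

type_synonym 'm fuzzy = "'m \<Rightarrow> real"

definition fuzzy_set :: "'m fuzzy \<Rightarrow> bool" where
  "fuzzy_set \<mu> \<longleftrightarrow> (\<forall>x. 0 \<le> \<mu> x \<and> \<mu> x \<le> 1)"

text \<open>A fuzzy Gamma-hyperoperation: each (a,gamma,b) gives a fuzzy subset of M.
  M and Gamma are the (nonempty) types 'm and 'g.\<close>
definition fuzzy_hyperop :: "('m \<Rightarrow> 'g \<Rightarrow> 'm \<Rightarrow> 'm fuzzy) \<Rightarrow> bool" where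
  "fuzzy_hyperop op \<longleftrightarrow> (\<forall>a g b. fuzzy_set (op a g b))"

definition elem_fz :: "('m \<Rightarrow> 'g \<Rightarrow> 'm \<Rightarrow> 'm fuzzy) \<Rightarrow> 'm \<Rightarrow> 'g \<Rightarrow> 'm fuzzy \<Rightarrow> 'm fuzzy" where
  "elem_fz op a g \<mu> = (\<lambda>r. if \<mu> = (\<lambda>_. 0) then 0 else (SUP t. min (op a g t r) (\<mu> t)))"

definition fz_elem :: "('m \<Rightarrow> 'g \<Rightarrow> 'm \<Rightarrow> 'm fuzzy) \<Rightarrow> 'm fuzzy \<Rightarrow> 'g \<Rightarrow> 'm \<Rightarrow> 'm fuzzy" where
  "fz_elem op \<mu> g a = (\<lambda>r. if \<mu> = (\<lambda>_. 0) then 0 else (SUP t. min (\<mu> t) (op t g a r)))"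

definition fz_fz :: "('m \<Rightarrow> 'g \<Rightarrow> 'm \<Rightarrow> 'm fuzzy) \<Rightarrow> 'm fuzzy \<Rightarrow> 'g \<Rightarrow> 'm fuzzy \<Rightarrow> 'm fuzzy" where
  "fz_fz op \<mu> g \<nu> = (\<lambda>t. (SUP pq. min (\<mu> (fst pq)) (min (op (fst pq) g (snd pq) t) (\<nu> (snd pq)))))"

definition fuzzy_gamma_hypersemigroup :: "('m \<Rightarrow> 'g \<Rightarrow> 'm \<Rightarrow> 'm fuzzy) \<Rightarrow> bool" where
  "fuzzy_gamma_hypersemigroup op \<longleftrightarrow> fuzzy_hyperop op \<and>
     (\<forall>a b c \<alpha> \<beta>. fz_elem op (op a \<alpha> b) \<beta> c = elem_fz op a \<alpha> (op b \<beta> c))"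

definition fz_subset :: "'m fuzzy \<Rightarrow> 'm fuzzy \<Rightarrow> bool" where
  "fz_subset \<mu> \<nu> \<longleftrightarrow> (\<forall>x. \<mu> x \<le> \<nu> x)"

definition fz_inter :: "'m fuzzy \<Rightarrow> 'm fuzzy \<Rightarrow> 'm fuzzy" where
  "fz_inter \<mu> \<nu> = (\<lambda>x. min (\<mu> x) (\<nu> x))"

definition fuzzy_sub_hypersemigroup :: "('m \<Rightarrow> 'g \<Rightarrow> 'm \<Rightarrow> 'm fuzzy) \<Rightarrow> 'm fuzzy \<Rightarrow> bool" where
  "fuzzy_sub_hypersemigroup op \<mu> \<longleftrightarrow> fuzzy_set \<mu> \<and> (\<forall>g. fz_subset (fz_fz op \<mu> g \<mu>) \<mu>)"

definition fuzzy_hyper_bi_ideal :: "('m \<Rightarrow> 'g \<Rightarrow> 'm \<Rightarrow> 'm fuzzy) \<Rightarrow> 'm fuzzy \<Rightarrow> bool" where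
  "fuzzy_hyper_bi_ideal op \<mu> \<longleftrightarrow> fuzzy_sub_hypersemigroup op \<mu> \<and>
     (\<forall>y \<alpha> \<beta>. fz_subset (fz_fz op (fz_elem op \<mu> \<alpha> y) \<beta> \<mu>) \<mu>)"

end

theory Submission
  imports Defs
begin

lemma fzfz_mono:
  assumes op: "fuzzy_hyperop op"
    and m: "\<And>x. m1 x \<le> m2 x" and n: "\<And>x. n1 x \<le> n2 x"
  shows "fz_fz op m1 g n1 t \<le> fz_fz op m2 g n2 t"
  unfolding fz_fz_def
proof (rule cSUP_mono)
  show "bdd_above ((\<lambda>pq. min (m2 (fst pq)) (min (op (fst pq) g (snd pq) t) (n2 (snd pq)))) ` UNIV)"
    using op unfolding fuzzy_hyperop_def fuzzy_set_def
    by (intro bdd_aboveI[where M=1]) (auto simp: min_le_iff_disj)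
next
  fix pq :: "'a \<times> 'a"
  show "\<exists>m\<in>UNIV. min (m1 (fst pq)) (min (op (fst pq) g (snd pq) t) (n1 (snd pq)))
        \<le> min (m2 (fst m)) (min (op (fst m) g (snd m) t) (n2 (snd m)))"
    using m[of "fst pq"] n[of "snd pq"] by (intro bexI[of _ pq]) (auto intro!: min.mono)
qed simp

lemma fzelem_mono:
  assumes op: "fuzzy_hyperop op"
    and m: "\<And>x. m1 x \<le> m2 x" and f1: "fuzzy_set m1" and f2: "fuzzy_set m2"
  shows "fz_elem op m1 g a r \<le> fz_elem op m2 g a r"
proof -
  have bdd: "bdd_above ((\<lambda>t. min (m2 t) (op t g a r)) ` UNIV)"
    using op unfolding fuzzy_hyperop_def fuzzy_set_def
    by (intro bdd_aboveI[where M=1]) (auto simp: min_le_iff_disj)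
  show ?thesis
  proof (cases "m1 = (\<lambda>_. 0)")
    case True
    show ?thesis
    proof (cases "m2 = (\<lambda>_. 0)")
      case False
      have "0 \<le> min (m2 undefined) (op undefined g a r)"
        using op f2 unfolding fuzzy_hyperop_def fuzzy_set_def by auto
      also have "\<dots> \<le> (SUP t. min (m2 t) (op t g a r))"
        by (rule cSUP_upper[OF _ bdd]) simp
      finally show ?thesis using True False by (simp add: fz_elem_def)
    qed (simp add: fz_elem_def True)
  next
    case False
    then obtain x where "m1 x \<noteq> 0" by auto
    with f1 m have "m2 x \<noteq> 0" unfolding fuzzy_set_def by (metis order.antisym)
    hence m2: "m2 \<noteq> (\<lambda>_. 0)" by auto
    have "(SUP t. min (m1 t) (op t g a r)) \<le> (SUP t. min (m2 t) (op t g a r))"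
      proof (rule cSUP_mono[OF _ bdd])
      fix n show "\<exists>k\<in>UNIV. min (m1 n) (op n g a r) \<le> min (m2 k) (op k g a r)"
        using m[of n] by (intro bexI[of _ n]) (auto intro!: min.mono)
    qed simp
    thus ?thesis using False m2 by (simp add: fz_elem_def)
  qed
qed

lemma fzelem_nonneg_le1:
  assumes op: "fuzzy_hyperop op" and f: "fuzzy_set m"
  shows "fuzzy_set (fz_elem op m g a)"
  unfolding fuzzy_set_def
proof
  fix r
  have bdd: "bdd_above ((\<lambda>t. min (m t) (op t g a r)) ` UNIV)"
    using op unfolding fuzzy_hyperop_def fuzzy_set_def
    by (intro bdd_aboveI[where M=1]) (auto simp: min_le_iff_disj)
  have "0 \<le> min (m undefined) (op undefined g a r)"
    using op f unfolding fuzzy_hyperop_def fuzzy_set_def by auto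
  also have "\<dots> \<le> (SUP t. min (m t) (op t g a r))"
    by (rule cSUP_upper[OF _ bdd]) simp
  finally have a: "0 \<le> (SUP t. min (m t) (op t g a r))" .
  have b: "(SUP t. min (m t) (op t g a r)) \<le> 1"
    by (rule cSUP_least) (use op in \<open>auto simp: fuzzy_hyperop_def fuzzy_set_def min_le_iff_disj\<close>)
  show "0 \<le> fz_elem op m g a r \<and> fz_elem op m g a r \<le> 1"
    using a b by (simp add: fz_elem_def)
qed

theorem theorem4p13:
  fixes op :: "'m \<Rightarrow> 'g \<Rightarrow> 'm \<Rightarrow> 'm fuzzy" and \<mu> \<nu> :: "'m fuzzy"
  assumes "fuzzy_gamma_hypersemigroup op"
    and "fuzzy_hyper_bi_ideal op \<mu>"
    and "fuzzy_hyper_bi_ideal op \<nu>"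
  shows "fuzzy_hyper_bi_ideal op (fz_inter \<mu> \<nu>)"
proof -
  have op: "fuzzy_hyperop op" using assms(1) by (simp add: fuzzy_gamma_hypersemigroup_def)
  have fm: "fuzzy_set \<mu>" and fn: "fuzzy_set \<nu>"
    using assms(2,3) by (auto simp: fuzzy_hyper_bi_ideal_def fuzzy_sub_hypersemigroup_def)
  let ?i = "fz_inter \<mu> \<nu>"
  have fi: "fuzzy_set ?i" using fm fn by (auto simp: fuzzy_set_def fz_inter_def min_le_iff_disj)
  have im: "\<And>x. ?i x \<le> \<mu> x" and iv: "\<And>x. ?i x \<le> \<nu> x" by (auto simp: fz_inter_def)
  have sub: "fz_subset (fz_fz op ?i g ?i) ?i" for g
  proof -
    have "fz_fz op \<mu> g \<mu> x \<le> \<mu> x" "fz_fz op \<nu> g \<nu> x \<le> \<nu> x" for x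
      using assms(2,3) by (auto simp: fuzzy_hyper_bi_ideal_def fuzzy_sub_hypersemigroup_def fz_subset_def)
    moreover have "fz_fz op ?i g ?i x \<le> fz_fz op \<mu> g \<mu> x" "fz_fz op ?i g ?i x \<le> fz_fz op \<nu> g \<nu> x" for x
      using fzfz_mono[OF op im im] fzfz_mono[OF op iv iv] by auto
    ultimately show ?thesis unfolding fz_subset_def fz_inter_def by (meson min.boundedI order_trans)
  qed
  have bi: "fz_subset (fz_fz op (fz_elem op ?i a y) b ?i) ?i" for a y b
  proof -
    have "fz_fz op (fz_elem op \<mu> a y) b \<mu> x \<le> \<mu> x" "fz_fz op (fz_elem op \<nu> a y) b \<nu> x \<le> \<nu> x" for x
      using assms(2,3) by (auto simp: fuzzy_hyper_bi_ideal_def fz_subset_def)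
    moreover have "fz_fz op (fz_elem op ?i a y) b ?i x \<le> fz_fz op (fz_elem op \<mu> a y) b \<mu> x"
        "fz_fz op (fz_elem op ?i a y) b ?i x \<le> fz_fz op (fz_elem op \<nu> a y) b \<nu> x" for x
      using fzfz_mono[OF op fzelem_mono[OF op im fi fm] im]
            fzfz_mono[OF op fzelem_mono[OF op iv fi fn] iv] by auto
    ultimately show ?thesis unfolding fz_subset_def fz_inter_def by (meson min.boundedI order_trans)
  qed
  show ?thesis using fi sub bi
    by (auto simp: fuzzy_hyper_bi_ideal_def fuzzy_sub_hypersemigroup_def)
qed

end
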